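(* Let $\lambda=(\lambda_1,\ldots,\lambda_n)\in\mathbb{R}_{<0}^n$ have pairwise distinct entries, and let $\lambda_{\neg\max}$ be the $(n-1)$-tuple obtained from $\lambda$ by removing its maximal entry. Then for each $k=1,\ldots,n-1$, $$\lim_{t\to\infty}\frac{\nu_{k-1,\lambda}(t)}{\nu_{k,\lambda}(t)}=\frac{\kappa_{k-1,\lambda_{\neg\max}}}{\kappa_{k,\lambda_{\neg\max}}}.$$
   Context: $V_\lambda$ is the $n\times n$ Vandermonde matrix with $(i,j)$ entry $\lambda_j^{i-1}$, and $[\nu_{0,\lambda}(t),\ldots,\nu_{n-1,\lambda}(t)]=[e^{\lambda_1 t},\ldots,e^{\lambda_n t}]V_\lambda^{-1}$. For a tuple $\mu=(\mu_1,\ldots,\mu_p)$, the companion coefficients $\kappa_{k,\mu}$ ($0\le k\le p$) are defined by $\prod_{j=1}^p(s-\mu_j)=\sum_{k=0}^p\kappa_{k,\mu}s^k$. *)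

theory Defs
  imports Complex_Main "HOL-Computational_Algebra.Polynomial"
    "Jordan_Normal_Form.Gauss_Jordan_Elimination"
begin

text \<open>Tuples are lists (0-indexed). V has (i,j) entry lam_j ^ i (rows i = 0..n-1).\<close>
definition vandermonde :: "real list \<Rightarrow> real mat" where
  "vandermonde lam = mat (length lam) (length lam) (\<lambda>(i,j). (lam ! j) ^ i)"

definition nu :: "nat \<Rightarrow> real list \<Rightarrow> real \<Rightarrow> real" where
  "nu k lam t = (\<Sum>j<length lam. exp (lam ! j * t) * (the (mat_inverse (vandermonde lam)) $$ (j, k)))"

definition kappa :: "nat \<Rightarrow> real list \<Rightarrow> real" where
  "kappa k mu = coeff (prod_list (map (\<lambda>m. [:- m, 1:]) mu)) k"

definition remove_max :: "real list \<Rightarrow> real list" where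
  "remove_max lam = remove1 (Max (set lam)) lam"

end

theory Submission imports Defs "Jordan_Normal_Form.Determinant" begin

lemma poly_sum_lessThan:
  assumes "degree p < n"
  shows "poly p (x::real) = (\<Sum>i<n. coeff p i * x ^ i)"
proof -
  have "poly p x = (\<Sum>i\<le>degree p. coeff p i * x ^ i)" by (rule poly_altdef)
  also have "\<dots> = (\<Sum>i<n. coeff p i * x ^ i)"
    by (rule sum.mono_neutral_left) (use assms in \<open>auto simp: coeff_eq_0\<close>)
  finally show ?thesis .
qed

lemma coeff_prod_neg_roots:
  fixes S :: "real set"
  assumes "finite S" "\<forall>x\<in>S. x < 0"
  shows "(\<forall>k. coeff (\<Prod>x\<in>S. [:-x,1:]) k \<ge> 0) \<and> (\<forall>k\<le>card S. coeff (\<Prod>x\<in>S. [:-x,1:]) k > 0)"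
  using assms
proof (induction S rule: finite_induct)
  case empty
  then show ?case by (auto simp: coeff_1 )
next
  case (insert a S)
  let ?Q = "\<Prod>x\<in>S. [:-x,1:]"
  have IH: "\<forall>k. coeff ?Q k \<ge> 0" "\<forall>k\<le>card S. coeff ?Q k > 0" using insert by auto
  have a: "-a > 0" using insert by auto
  have eq: "(\<Prod>x\<in>insert a S. [:-x,1:]) = Polynomial.smult (-a) ?Q + pCons 0 ?Q"
    using insert by (simp add: mult_pCons_left)
  have c: "coeff (\<Prod>x\<in>insert a S. [:-x,1:]) k = -a * coeff ?Q k + (case k of 0 \<Rightarrow> 0 | Suc k' \<Rightarrow> coeff ?Q k')" for k
    unfolding eq by (cases k) auto
  show ?case
  proof (intro conjI allI impI)
    fix k
    have h1: "-a * coeff ?Q k \<ge> 0" using IH a by (simp add: mult_nonpos_nonneg)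
    have h2: "(case k of 0 \<Rightarrow> 0 | Suc k' \<Rightarrow> coeff ?Q k') \<ge> 0" using IH by (cases k) auto
    show "coeff (\<Prod>x\<in>insert a S. [:-x,1:]) k \<ge> 0"
      unfolding c using h1 h2 by linarith
  next
    fix k assume k: "k \<le> card (insert a S)"
    show "coeff (\<Prod>x\<in>insert a S. [:-x,1:]) k > 0"
    proof (cases k)
      case 0
      have "coeff ?Q 0 > 0" using IH by auto
      then have "-a * coeff ?Q 0 > 0" using a by (simp add: mult_neg_pos)
      then show ?thesis unfolding c using 0 by simp
    next
      case (Suc k')
      then have "k' \<le> card S" using k insert by auto
      then have "coeff ?Q k' > 0" using IH by auto
      moreover have "-a * coeff ?Q k \<ge> 0" using IH a by (simp add: mult_nonpos_nonneg)
      ultimately show ?thesis unfolding c using Suc by auto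
    qed
  qed
qed

lemma exp_neg_lim: "(a::real) < 0 \<Longrightarrow> ((\<lambda>t. exp(a*t)) \<longlongrightarrow> 0) at_top"
  by (rule filterlim_compose[OF exp_at_bot] filterlim_tendsto_neg_mult_at_bot tendsto_const filterlim_ident | assumption)+

theorem proposition8:
  fixes lam :: "real list" and k :: nat
  assumes "distinct lam"
    and "\<forall>x\<in>set lam. x < 0"
    and "1 \<le> k" and "k \<le> length lam - 1"
  shows "((\<lambda>t. nu (k - 1) lam t / nu k lam t) \<longlongrightarrow>
           kappa (k - 1) (remove_max lam) / kappa k (remove_max lam)) at_top"
proof -
  define n where "n = length lam"
  have n2: "n \<ge> 2" using assms(3,4) unfolding n_def by auto
  define P where "P j = (\<Prod>x\<in>set lam - {lam ! j}. [:-x,1:])" for j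
  define c where "c j = (\<Prod>x\<in>set lam - {lam ! j}. (lam ! j - x))" for j
  define B where "B = mat n n (\<lambda>(j,k). coeff (P j) k / c j)"
  define V where "V = vandermonde lam"
  have V: "V \<in> carrier_mat n n" unfolding V_def vandermonde_def n_def by auto
  have B: "B \<in> carrier_mat n n" unfolding B_def by auto
  have cnz: "c j \<noteq> 0" for j unfolding c_def by (auto simp: prod_zero_iff)
  have degP: "degree (P j) < n" if "j < n" for j
  proof -
    have "degree (P j) \<le> sum (degree \<circ> (\<lambda>x. [:-x,1:])) (set lam - {lam ! j})"
      unfolding P_def by (rule degree_prod_sum_le) auto
    also have "\<dots> = card (set lam - {lam ! j})" by simp
    also have "\<dots> < n" using that unfolding n_def
      by (metis card_Diff1_less card_length finite_set le_trans nth_mem order.strict_trans2 verit_comp_simplify1(3))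
    finally show ?thesis .
  qed
  have polyP: "poly (P j) y = (\<Prod>x\<in>set lam - {lam ! j}. (y - x))" for j y
    unfolding P_def by (simp add: poly_prod)
  have BV: "B * V = 1\<^sub>m n"
  proof (rule eq_matI)
    fix i l assume il: "i < dim_row (1\<^sub>m n)" "l < dim_col (1\<^sub>m n)"
    then have i: "i < n" and l: "l < n" by auto
    have "(B * V) $$ (i, l) = (\<Sum>k\<in>{0..<n}. B $$ (i,k) * V $$ (k,l))"
      using i l V B by (simp add: index_mult_mat scalar_prod_def)
    also have "\<dots> = (\<Sum>k<n. coeff (P i) k / c i * lam ! l ^ k)"
      unfolding atLeast0LessThan
    proof (rule sum.cong[OF refl])
      fix k assume "k \<in> {..<n}"
      then show "B $$ (i,k) * V $$ (k,l) = coeff (P i) k / c i * lam ! l ^ k"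
        using i l unfolding B_def V_def vandermonde_def n_def by simp
    qed
    also have "\<dots> = poly (P i) (lam ! l) / c i"
      by (simp add: poly_sum_lessThan[OF degP[OF i]] sum_divide_distrib)
    also have "\<dots> = 1\<^sub>m n $$ (i, l)"
    proof (cases "i = l")
      case True then show ?thesis using i cnz by (simp add: polyP c_def)
    next
      case False
      then have "lam ! l \<in> set lam - {lam ! i}" using i l assms(1) unfolding n_def
        by (auto simp: nth_eq_iff_index_eq)
      then have "poly (P i) (lam ! l) = 0" unfolding polyP
        by (simp add: prod_zero_iff)
      then show ?thesis using False i l by simp
    qed
    finally show "(B * V) $$ (i, l) = 1\<^sub>m n $$ (i, l)" .
  qed (use B V in auto)
  have VB: "V * B = 1\<^sub>m n" by (rule mat_mult_left_right_inverse[OF B V BV])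
  have Binv: "the (mat_inverse V) = B"
  proof (cases "mat_inverse V")
    case None
    from mat_inverse(1)[OF V None, of undefined] have False
      using V B VB BV unfolding Units_def ring_mat_def by auto
    then show ?thesis ..
  next
    case (Some B')
    from mat_inverse(2)[OF V Some] have B'': "V * B' = 1\<^sub>m n" "B' \<in> carrier_mat n n" by auto
    have "B' = (B * V) * B'" using B''(2) BV by simp
    also have "\<dots> = B * (V * B')" using B V B''(2) by (simp add: assoc_mult_mat)
    also have "\<dots> = B" using B''(1) B by simp
    finally show ?thesis using Some by simp
  qed
  have ne: "lam \<noteq> []" using n2 n_def by auto
  have "Max (set lam) \<in> set lam" using ne by auto
  then obtain m where m: "m < n" "lam ! m = Max (set lam)" unfolding n_def by (metis in_set_conv_nth)
  have less: "lam ! j < lam ! m" if "j < n" "j \<noteq> m" for j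
  proof -
    have "lam ! j \<le> lam ! m" using that m by (simp add: n_def)
    moreover have "lam ! j \<noteq> lam ! m" using that m(1) assms(1) by (simp add: n_def nth_eq_iff_index_eq)
    ultimately show ?thesis by simp
  qed
  define g where "g k t = (\<Sum>j<n. exp ((lam ! j - lam ! m) * t) * B $$ (j, k))" for k t
  have nu_eq: "nu k lam t = exp (lam ! m * t) * g k t" for k t
    unfolding nu_def g_def Binv[unfolded V_def] n_def[symmetric]
    by (simp add: sum_distrib_left mult.assoc[symmetric] exp_add[symmetric] algebra_simps)
  have glim: "(g k \<longlongrightarrow> B $$ (m, k)) at_top" for k
  proof -
    have "(g k \<longlongrightarrow> (\<Sum>j<n. (if j = m then 1 else 0) * B $$ (j, k))) at_top"
      unfolding g_def
    proof (intro tendsto_sum tendsto_mult tendsto_const)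
      fix j assume j: "j \<in> {..<n}"
      show "((\<lambda>t. exp ((lam ! j - lam ! m) * t)) \<longlongrightarrow> (if j = m then 1 else 0)) at_top"
      proof (cases "j = m")
        case True then show ?thesis by simp
      next
        case False then show ?thesis using less[of j] j by (simp add: exp_neg_lim)
      qed
    qed
    also have "(\<Sum>j<n. (if j = m then 1 else 0) * B $$ (j, k)) = B $$ (m, k)"
      proof -
      have "(\<Sum>j<n. (if j = m then 1 else 0) * B $$ (j, k)) = (\<Sum>j<n. if j = m then B $$ (j, k) else 0)"
        by (rule sum.cong) auto
      also have "\<dots> = B $$ (m, k)" using m(1) by (subst sum.delta) auto
      finally show ?thesis .
    qed
    finally show ?thesis .
  qed
  have rm: "prod_list (map (\<lambda>m. [:- m, 1:]) (remove_max lam)) = P m"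
  proof -
    have d: "distinct (remove_max lam)" unfolding remove_max_def using assms(1) by simp
    have "set (remove_max lam) = set lam - {lam ! m}" unfolding remove_max_def m(2)
      using assms(1) by (simp add: set_remove1_eq)
    then show ?thesis unfolding P_def using prod.distinct_set_conv_list[OF d, of "\<lambda>m. [:- m, 1:]"]
      by simp
  qed
  have kap: "kappa i (remove_max lam) = coeff (P m) i" for i unfolding kappa_def rm ..
  have kn: "k < n" "k - 1 < n" using assms(3,4) n_def n2 by auto
  have Bm: "B $$ (m, i) = coeff (P m) i / c m" if "i < n" for i
    using that m unfolding B_def by simp
  have cardS: "card (set lam - {lam ! m}) = n - 1"
    using m(1) assms(1) unfolding n_def by (simp add: distinct_card card_Diff_singleton)
  have pos: "coeff (P m) k > 0"
    using coeff_prod_neg_roots[of "set lam - {lam ! m}"] assms(2,4) cardS unfolding P_def n_def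
    by auto
  have "((\<lambda>t. g (k-1) t / g k t) \<longlongrightarrow> B $$ (m, k-1) / B $$ (m, k)) at_top"
    by (rule tendsto_divide[OF glim glim]) (use pos cnz kn Bm in auto)
  moreover have "B $$ (m, k-1) / B $$ (m, k) = kappa (k - 1) (remove_max lam) / kappa k (remove_max lam)"
    using kn cnz[of m] by (simp add: Bm kap)
  moreover have "nu (k - 1) lam t / nu k lam t = g (k-1) t / g k t" for t
    unfolding nu_eq by simp
  ultimately show ?thesis by simp
qed
end
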